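(* Assume Assumptions 1 and 2 hold and $\Delta=\{\delta:\|\delta\|_2\le\varepsilon\}$. Let $S,S'$ be datasets of size $n$ differing in only one sample $s$, and consider coupled runs of $A_{\text{Vanilla}}$ on $S$ and $S'$ with iterates $w_t,w'_t$ and $d^{(w)}_t=\|w_t-w'_t\|$. Then for every step $t$, $$\mathbb E[d^{(w)}_t]\le(1+\alpha_{w,t}\beta)\mathbb E[d^{(w)}_{t-1}]+\frac{\alpha_{w,t}\beta}{n}\Big(2\varepsilon n+\frac{2L}{\beta}\Big).$$
   Context: Loss $h(w,\delta;z)$, $w\in W$ Euclidean, $\delta\in\Delta$, Euclidean norms. Assumption 1: for every $z$, and all $w,w'\in W$, $\delta,\delta'\in\Delta$: $|h(w,\delta;z)-h(w',\delta';z)|^2\le L^2(\|w-w'\|^2+\|\delta-\delta'\|^2)$ and $|h(w,\delta;z)-h(w',\delta;z)|\le L_w\|w-w'\|$. Assumption 2: for every $z$, $h(\cdot,\cdot;z)$ is continuously differentiable and $\|\nabla_w h(w,\delta;z)-\nabla_w h(w',\delta';z)\|^2+\|\nabla_\delta h(w,\delta;z)-\nabla_\delta h(w',\delta';z)\|^2\le\beta^2(\|w-w'\|^2+\|\delta-\delta'\|^2)$. Algorithm $A_{\text{Vanilla}}$: from $w_0$, for $t=1,\dots,T$: draw a uniformly random mini-batch $B_t\subset S$ of size $b$; for each $z_j\in B_t$ pick $\delta_j\in\arg\max_{\delta\in\Delta}h(w_{t-1},\delta;z_j)$; set $w_t=w_{t-1}-\frac{\alpha_{w,t}}{b}\sum_{z_j\in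 B_t}\nabla_w h(w_{t-1},\delta_j;z_j)$. Coupling: both runs use the same initialization and the same mini-batch index sets, so the batches differ only if they contain the index of $s$, which happens with probability $b/n$. Expectation is over the mini-batch randomness. *)

theory Defs
  imports "HOL-Analysis.Analysis" "HOL-Probability.Probability"
begin

text \<open>Iterates of the vanilla adversarial SGD algorithm.
  b: mini-batch size; w0: initialization; alpha t: step size at step t;
  sel t j w z: the chosen maximizer delta_j (for sample index j at step t, current iterate w);
  gw w d z: the gradient of h(.,d;z) with respect to w at w;
  S j: the j-th sample of the dataset (indices 0..<n);
  B t: the mini-batch (set of indices) drawn at step t.\<close>
fun vanilla_iter ::
  "nat \<Rightarrow> 'w::euclidean_space \<Rightarrow> (nat \<Rightarrow> real) \<Rightarrow> (nat \<Rightarrow> nat \<Rightarrow> 'w \<Rightarrow> 'z \<Rightarrow> 'd)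
   \<Rightarrow> ('w \<Rightarrow> 'd \<Rightarrow> 'z \<Rightarrow> 'w) \<Rightarrow> (nat \<Rightarrow> 'z) \<Rightarrow> (nat \<Rightarrow> nat set) \<Rightarrow> nat \<Rightarrow> 'w"
where
  "vanilla_iter b w0 alpha sel gw S B 0 = w0"
| "vanilla_iter b w0 alpha sel gw S B (Suc t) =
     (let w = vanilla_iter b w0 alpha sel gw S B t
      in w - (alpha (Suc t) / real b) *\<^sub>R
             (\<Sum>j\<in>B (Suc t). gw w (sel (Suc t) j w (S j)) (S j)))"

text \<open>All sequences of mini-batches for steps 1..T, each a b-subset of the indices {0..<n}.
  Mini-batches are drawn uniformly and independently, i.e. uniformly from this set.\<close>
definition batch_seqs :: "nat \<Rightarrow> nat \<Rightarrow> nat \<Rightarrow> (nat \<Rightarrow> nat set) set" where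
  "batch_seqs n b T = PiE {1..T} (\<lambda>_. {B. B \<subseteq> {..<n} \<and> card B = b})"

end

theory Submission
  imports Defs
begin

lemma real_deriv_lip_bound:
  fixes g :: "real \<Rightarrow> real"
  assumes d: "(g has_derivative (\<lambda>s. s * D)) (at 0)"
    and lip: "\<And>s. \<bar>g s - g 0\<bar> \<le> C * \<bar>s\<bar>"
  shows "\<bar>D\<bar> \<le> C"
proof -
  have "(g has_field_derivative D) (at 0)"
    using d unfolding has_field_derivative_def by (simp add: mult.commute[of _ D])
  then have "((\<lambda>y. (g y - g 0) / (y - 0)) \<longlongrightarrow> D) (at 0)"
    using has_field_derivative_iff by blast
  then have "((\<lambda>y. \<bar>(g y - g 0) / (y - 0)\<bar>) \<longlongrightarrow> \<bar>D\<bar>) (at 0)"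
    by (rule tendsto_rabs)
  moreover have "eventually (\<lambda>y. \<bar>(g y - g 0) / (y - 0)\<bar> \<le> C) (at (0::real))"
    unfolding eventually_at_filter
  proof (rule always_eventually, intro allI impI)
    fix y :: real assume "y \<noteq> 0"
    then show "\<bar>(g y - g 0) / (y - 0)\<bar> \<le> C"
      using lip[of y] by (simp add: abs_divide divide_le_eq)
  qed
  ultimately show ?thesis
    by (rule tendsto_upperbound) simp
qed

lemma grad_norm_bound:
  fixes h :: "'w::euclidean_space \<Rightarrow> 'd::euclidean_space \<Rightarrow> real"
  assumes deriv: "((\<lambda>p. h (fst p) (snd p)) has_derivative (\<lambda>p. g \<bullet> fst p + k \<bullet> snd p))
                    (at (w,\<delta>) within (UNIV \<times> C))"
    and dC: "\<delta> \<in> C"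
    and lip: "\<And>w'. \<bar>h w' \<delta> - h w \<delta>\<bar> \<le> L * norm (w' - w)"
    and L0: "L \<ge> 0"
  shows "norm g \<le> L"
proof -
  define f where "f = (\<lambda>s::real. (w + s *\<^sub>R g, \<delta>))"
  have fd: "(f has_derivative (\<lambda>s. (s *\<^sub>R g, 0))) (at 0)"
    unfolding f_def by (auto intro!: derivative_eq_intros)
  have "f ` UNIV \<subseteq> UNIV \<times> C" using dC by (auto simp: f_def)
  moreover have "f 0 = (w, \<delta>)" by (simp add: f_def)
  ultimately have hd: "((\<lambda>p. h (fst p) (snd p)) has_derivative (\<lambda>p. g \<bullet> fst p + k \<bullet> snd p))
                    (at (f 0) within (f ` UNIV))"
    using deriv has_derivative_subset by metis
  have "((\<lambda>s. h (fst (f s)) (snd (f s))) has_derivative (\<lambda>s. g \<bullet> fst (s *\<^sub>R g, 0::'d) + k \<bullet> snd (s *\<^sub>R g, 0::'d))) (at 0)"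
    using has_derivative_in_compose[OF fd hd] by simp
  then have "((\<lambda>s. h (w + s *\<^sub>R g) \<delta>) has_derivative (\<lambda>s. s * (g \<bullet> g))) (at 0)"
    by (simp add: f_def)
  moreover have "\<And>s. \<bar>h (w + s *\<^sub>R g) \<delta> - h (w + 0 *\<^sub>R g) \<delta>\<bar> \<le> (L * norm g) * \<bar>s\<bar>"
  proof -
    fix s
    have "\<bar>h (w + s *\<^sub>R g) \<delta> - h w \<delta>\<bar> \<le> L * norm (s *\<^sub>R g)"
      using lip[of "w + s *\<^sub>R g"] by simp
    then show "\<bar>h (w + s *\<^sub>R g) \<delta> - h (w + 0 *\<^sub>R g) \<delta>\<bar> \<le> (L * norm g) * \<bar>s\<bar>"
      by (simp add: mult_ac)
  qed
  ultimately have "\<bar>g \<bullet> g\<bar> \<le> L * norm g"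
    by (rule real_deriv_lip_bound)
  then have "norm g * norm g \<le> L * norm g"
    by (simp add: power2_norm_eq_inner[symmetric] power2_eq_square)
  then show ?thesis
    by (cases "norm g = 0") (auto simp: mult_le_cancel_right L0)
qed

theorem lemma4:
  fixes h :: "'w::euclidean_space \<Rightarrow> 'd::euclidean_space \<Rightarrow> 'z \<Rightarrow> real"
    and gw :: "'w \<Rightarrow> 'd \<Rightarrow> 'z \<Rightarrow> 'w"
    and gd :: "'w \<Rightarrow> 'd \<Rightarrow> 'z \<Rightarrow> 'd"
    and L Lw \<beta> \<epsilon> :: real
    and n b T t i :: nat
    and S S' :: "nat \<Rightarrow> 'z"
    and w0 :: 'w
    and alpha :: "nat \<Rightarrow> real"
    and sel sel' :: "nat \<Rightarrow> nat \<Rightarrow> 'w \<Rightarrow> 'z \<Rightarrow> 'd"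
  assumes eps: "\<epsilon> \<ge> 0"
    and L_nonneg: "L \<ge> 0" and beta_pos: "\<beta> > 0"
    and A1: "\<And>z w w' \<delta> \<delta>'. \<delta> \<in> cball 0 \<epsilon> \<Longrightarrow> \<delta>' \<in> cball 0 \<epsilon> \<Longrightarrow>
              \<bar>h w \<delta> z - h w' \<delta>' z\<bar>\<^sup>2 \<le> L\<^sup>2 * ((norm (w - w'))\<^sup>2 + (norm (\<delta> - \<delta>'))\<^sup>2)"
    and A1w: "\<And>z w w' \<delta>. \<delta> \<in> cball 0 \<epsilon> \<Longrightarrow> \<bar>h w \<delta> z - h w' \<delta> z\<bar> \<le> Lw * norm (w - w')"
    and grad: "\<And>z w \<delta>. \<delta> \<in> cball 0 \<epsilon> \<Longrightarrow>
              ((\<lambda>p. h (fst p) (snd p) z) has_derivative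
                 (\<lambda>p. gw w \<delta> z \<bullet> fst p + gd w \<delta> z \<bullet> snd p))
               (at (w, \<delta>) within (UNIV \<times> cball 0 \<epsilon>))"
    and grad_cont: "\<And>z. continuous_on (UNIV \<times> cball 0 \<epsilon>) (\<lambda>p. gw (fst p) (snd p) z)"
    and grad_cont': "\<And>z. continuous_on (UNIV \<times> cball 0 \<epsilon>) (\<lambda>p. gd (fst p) (snd p) z)"
    and A2: "\<And>z w w' \<delta> \<delta>'. \<delta> \<in> cball 0 \<epsilon> \<Longrightarrow> \<delta>' \<in> cball 0 \<epsilon> \<Longrightarrow>
              (norm (gw w \<delta> z - gw w' \<delta>' z))\<^sup>2 + (norm (gd w \<delta> z - gd w' \<delta>' z))\<^sup>2
                \<le> \<beta>\<^sup>2 * ((norm (w - w'))\<^sup>2 + (norm (\<delta> - \<delta>'))\<^sup>2)"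
    and b_pos: "1 \<le> b" and b_le: "b \<le> n"
    and i_lt: "i < n"
    and SS': "\<And>j. j < n \<Longrightarrow> j \<noteq> i \<Longrightarrow> S' j = S j"
    and alpha_nonneg: "\<And>k. alpha k \<ge> 0"
    and sel_max: "\<And>k j w z. sel k j w z \<in> cball 0 \<epsilon> \<and>
                     (\<forall>\<delta>\<in>cball 0 \<epsilon>. h w \<delta> z \<le> h w (sel k j w z) z)"
    and sel'_max: "\<And>k j w z. sel' k j w z \<in> cball 0 \<epsilon> \<and>
                     (\<forall>\<delta>\<in>cball 0 \<epsilon>. h w \<delta> z \<le> h w (sel' k j w z) z)"
    and t_range: "t \<in> {1..T}"
  shows "measure_pmf.expectation (pmf_of_set (batch_seqs n b T))
           (\<lambda>B. norm (vanilla_iter b w0 alpha sel gw S B t - vanilla_iter b w0 alpha sel' gw S' B t))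
         \<le> (1 + alpha t * \<beta>) *
             measure_pmf.expectation (pmf_of_set (batch_seqs n b T))
               (\<lambda>B. norm (vanilla_iter b w0 alpha sel gw S B (t - 1)
                          - vanilla_iter b w0 alpha sel' gw S' B (t - 1)))
           + (alpha t * \<beta> / real n) * (2 * \<epsilon> * real n + 2 * L / \<beta>)"
  proof -
  define A where "A = {X. X \<subseteq> {..<n} \<and> card X = b}"
  define SS where "SS = batch_seqs n b T"
  define d where "d k B = norm (vanilla_iter b w0 alpha sel gw S B k - vanilla_iter b w0 alpha sel' gw S' B k)" for k B
  have SS_def': "SS = PiE {1..T} (\<lambda>_. A)" unfolding SS_def batch_seqs_def A_def by simp
  have finA: "finite A" unfolding A_def by (auto intro: finite_subset)
  have "{..<b} \<in> A" using b_le unfolding A_def by auto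
  hence Ane: "A \<noteq> {}" by auto
  have finSS: "finite SS" unfolding SS_def' using finA by (auto intro: finite_PiE)
  have SSne: "SS \<noteq> {}" unfolding SS_def' using Ane by (simp add: PiE_eq_empty_iff)
  have t1: "t \<ge> 1" "t \<le> T" using t_range by auto
  have gbound: "norm (gw w \<delta> z) \<le> L" if "\<delta> \<in> cball 0 \<epsilon>" for w \<delta> z
  proof (rule grad_norm_bound[where h="\<lambda>w \<delta>. h w \<delta> z" and k="gd w \<delta> z" and C="cball 0 \<epsilon>" and \<delta>=\<delta> and w=w])
    show "((\<lambda>p. h (fst p) (snd p) z) has_derivative (\<lambda>p. gw w \<delta> z \<bullet> fst p + gd w \<delta> z \<bullet> snd p))
       (at (w, \<delta>) within UNIV \<times> cball 0 \<epsilon>)" using grad[OF that] .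
    show "\<delta> \<in> cball 0 \<epsilon>" by fact
    show "L \<ge> 0" by fact
    fix w'
    have "\<bar>h w' \<delta> z - h w \<delta> z\<bar>\<^sup>2 \<le> (L * norm (w' - w))\<^sup>2"
      using A1[where z=z and w=w' and w'=w and \<delta>=\<delta> and \<delta>'=\<delta>] that by (simp add: power_mult_distrib)
    then show "\<bar>h w' \<delta> z - h w \<delta> z\<bar> \<le> L * norm (w' - w)"
      by (rule power2_le_imp_le) (simp add: L_nonneg)
  qed
  have lipg: "norm (gw w \<delta> z - gw w' \<delta>' z) \<le> \<beta> * norm (w - w') + 2 * \<epsilon> * \<beta>"
    if "\<delta> \<in> cball 0 \<epsilon>" "\<delta>' \<in> cball 0 \<epsilon>" for w w' \<delta> \<delta>' z
  proof -
    have y: "norm (\<delta> - \<delta>') \<le> 2 * \<epsilon>"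
      using that norm_triangle_ineq4[of \<delta> \<delta>'] by (simp add: dist_norm)
    have "(norm (gw w \<delta> z - gw w' \<delta>' z))\<^sup>2 \<le> \<beta>\<^sup>2 * ((norm (w - w'))\<^sup>2 + (norm (\<delta> - \<delta>'))\<^sup>2)"
      using A2[where z=z and w=w and w'=w' and \<delta>=\<delta> and \<delta>'=\<delta>'] that by (smt (verit) zero_le_power2)
    also have "\<dots> \<le> \<beta>\<^sup>2 * (norm (w - w') + 2 * \<epsilon>)\<^sup>2"
    proof (rule mult_left_mono)
      have "(norm (\<delta> - \<delta>'))\<^sup>2 \<le> (2 * \<epsilon>)\<^sup>2"
        using y by (intro power_mono) auto
      moreover have "0 \<le> norm (w - w') * (2 * \<epsilon>)" using eps by simp
      ultimately show "(norm (w - w'))\<^sup>2 + (norm (\<delta> - \<delta>'))\<^sup>2 \<le> (norm (w - w') + 2 * \<epsilon>)\<^sup>2"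
        by (simp add: power2_sum mult.commute)
    qed simp
    also have "\<dots> = (\<beta> * norm (w - w') + 2 * \<epsilon> * \<beta>)\<^sup>2"
      by (simp add: power_mult_distrib[symmetric] algebra_simps)
    finally show ?thesis
      by (rule power2_le_imp_le) (use eps beta_pos in simp)
  qed
  have step: "d t B \<le> (1 + alpha t * \<beta>) * d (t - 1) B + 2 * alpha t * \<epsilon> * \<beta>
                 + (alpha t / real b) * (if i \<in> B t then 2 * L else 0)" if B: "B \<in> SS" for B
  proof -
    define k where "k = t - 1"
    have tk: "t = Suc k" using t1 unfolding k_def by simp
    define W where "W = vanilla_iter b w0 alpha sel gw S B k"
    define W' where "W' = vanilla_iter b w0 alpha sel' gw S' B k"
    define G where "G j = gw W (sel t j W (S j)) (S j) - gw W' (sel' t j W' (S' j)) (S' j)" for j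
    have Bt: "B t \<in> A" using B t1 unfolding SS_def' by auto
    hence Bsub: "B t \<subseteq> {..<n}" and cardB: "card (B t) = b" and finB: "finite (B t)"
      unfolding A_def using b_pos by (auto simp: card_ge_0_finite)
    have eq: "vanilla_iter b w0 alpha sel gw S B t - vanilla_iter b w0 alpha sel' gw S' B t
        = (W - W') - (alpha t / real b) *\<^sub>R (\<Sum>j\<in>B t. G j)"
    proof -
      have "vanilla_iter b w0 alpha sel gw S B (Suc k) - vanilla_iter b w0 alpha sel' gw S' B (Suc k)
        = (W - W') - (alpha (Suc k) / real b) *\<^sub>R (\<Sum>j\<in>B (Suc k). gw W (sel (Suc k) j W (S j)) (S j) - gw W' (sel' (Suc k) j W' (S' j)) (S' j))"
        by (simp add: W_def W'_def Let_def sum_subtractf scaleR_diff_right algebra_simps)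
      then show ?thesis unfolding G_def tk .
    qed
    have Gb: "norm (G j) \<le> \<beta> * norm (W - W') + 2 * \<epsilon> * \<beta> + (if j = i then 2 * L else 0)"
      if "j \<in> B t" for j
    proof (cases "j = i")
      case True
      have "norm (G j) \<le> norm (gw W (sel t j W (S j)) (S j)) + norm (gw W' (sel' t j W' (S' j)) (S' j))"
        unfolding G_def by (rule norm_triangle_ineq4)
      also have "\<dots> \<le> L + L" using gbound sel_max sel'_max by (meson add_mono)
      moreover have "0 \<le> \<beta> * norm (W - W') + 2 * \<epsilon> * \<beta>" using beta_pos eps by simp
      ultimately show ?thesis using True by simp
    next
      case False
      with that Bsub have "S' j = S j" using SS' by auto
      then have "norm (G j) \<le> \<beta> * norm (W - W') + 2 * \<epsilon> * \<beta>"
        unfolding G_def using lipg sel_max sel'_max by metis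
      then show ?thesis using False by simp
    qed
    have "norm (\<Sum>j\<in>B t. G j) \<le> (\<Sum>j\<in>B t. \<beta> * norm (W - W') + 2 * \<epsilon> * \<beta> + (if j = i then 2 * L else 0))"
      by (rule order_trans[OF norm_sum sum_mono]) (rule Gb)
    also have "\<dots> = real b * (\<beta> * norm (W - W') + 2 * \<epsilon> * \<beta>) + (if i \<in> B t then 2 * L else 0)"
      using finB cardB by (simp add: sum.distrib)
    finally have sb: "norm (\<Sum>j\<in>B t. G j) \<le> real b * (\<beta> * norm (W - W') + 2 * \<epsilon> * \<beta>) + (if i \<in> B t then 2 * L else 0)" .
    have "d t B \<le> norm (W - W') + norm ((alpha t / real b) *\<^sub>R (\<Sum>j\<in>B t. G j))"
      unfolding d_def eq by (rule norm_triangle_ineq4)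
    also have "norm ((alpha t / real b) *\<^sub>R (\<Sum>j\<in>B t. G j)) = (alpha t / real b) * norm (\<Sum>j\<in>B t. G j)"
      using alpha_nonneg[of t] by simp
    also have "\<dots> \<le> (alpha t / real b) * (real b * (\<beta> * norm (W - W') + 2 * \<epsilon> * \<beta>) + (if i \<in> B t then 2 * L else 0))"
      by (rule mult_left_mono[OF sb]) (simp add: alpha_nonneg)
    also have "\<dots> = alpha t * (\<beta> * norm (W - W') + 2 * \<epsilon> * \<beta>) + (alpha t / real b) * (if i \<in> B t then 2 * L else 0)"
      using b_pos by (simp add: field_simps)
    finally show ?thesis unfolding d_def k_def[symmetric] W_def[symmetric] W'_def[symmetric]
      by (simp add: algebra_simps)
  qed
  define Ai where "Ai = {X \<in> A. i \<in> X}"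
  have cardSS: "card SS = card A * card A ^ (T - 1)"
  proof -
    have "card SS = (\<Prod>k\<in>{1..T}. card A)" unfolding SS_def' by (simp add: card_PiE)
    also have "\<dots> = card A ^ T" by simp
    also have "\<dots> = card A * card A ^ (T - 1)" using t1 by (cases T) auto
    finally show ?thesis .
  qed
  have cardSSi: "card {B \<in> SS. i \<in> B t} = card Ai * card A ^ (T - 1)"
  proof -
    have "{B \<in> SS. i \<in> B t} = PiE {1..T} ((\<lambda>_. A)(t := Ai))"
      unfolding SS_def' Ai_def using t1 by (intro set_eqI) (auto simp: PiE_iff split: if_splits)
    hence "card {B \<in> SS. i \<in> B t} = (\<Prod>k\<in>{1..T}. card (((\<lambda>_. A)(t := Ai)) k))"
      by (simp add: card_PiE)
    also have "\<dots> = card Ai * (\<Prod>k\<in>{1..T} - {t}. card A)"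
      using t1 by (subst prod.remove[of _ t]) auto
    also have "\<dots> = card Ai * card A ^ (T - 1)" using t1 by simp
    finally show ?thesis .
  qed
  have cardA: "card A = n choose b" unfolding A_def using n_subsets[of "{..<n}" b] by simp
  have cardAi: "card Ai = (n - 1) choose (b - 1)"
  proof -
    have "Ai = insert i ` {C. C \<subseteq> {..<n} - {i} \<and> card C = b - 1}"
    proof safe
      fix X assume X: "X \<in> Ai"
      hence fX: "finite X" using b_pos unfolding Ai_def A_def by (auto simp: card_ge_0_finite)
      show "X \<in> insert i ` {C. C \<subseteq> {..<n} - {i} \<and> card C = b - 1}"
      proof
        show "X = insert i (X - {i})" using X unfolding Ai_def by auto
        show "X - {i} \<in> {C. C \<subseteq> {..<n} - {i} \<and> card C = b - 1}"
          using X fX unfolding Ai_def A_def by auto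
      qed
    next
      fix C assume C: "C \<subseteq> {..<n} - {i}" "card C = b - 1"
      have fC: "finite C" using C(1) by (auto intro: finite_subset)
      have "i \<notin> C" using C(1) by auto
      hence "card (insert i C) = b" using C(2) fC b_pos by simp
      then show "insert i C \<in> Ai" unfolding Ai_def A_def using C fC i_lt b_pos by auto
    qed
    moreover have "inj_on (insert i) {C. C \<subseteq> {..<n} - {i} \<and> card C = b - 1}"
      by (rule inj_onI) auto
    ultimately have "card Ai = card {C. C \<subseteq> {..<n} - {i} \<and> card C = b - 1}"
      by (simp add: card_image)
    also have "\<dots> = (n - 1) choose (b - 1)"
      using n_subsets[of "{..<n} - {i}" "b - 1"] i_lt by simp
    finally show ?thesis .
  qed
  have binom: "card A * b = n * card Ai"
    using binomial_absorption[of "b - 1" n] b_pos unfolding cardA cardAi by (simp add: mult.commute)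
  have Apos: "card A > 0" using finA Ane by auto
  have ratio: "real (card {B \<in> SS. i \<in> B t}) = real (card SS) * real b / real n"
  proof -
    have "real n * real (card {B \<in> SS. i \<in> B t}) = real (card SS) * real b"
      unfolding cardSS cardSSi using binom
      by (metis (mono_tags) mult.assoc mult.commute of_nat_mult)
    moreover have "n > 0" using i_lt by simp
    ultimately show ?thesis by (simp add: field_simps)
  qed
  have "(\<Sum>B\<in>SS. d t B) \<le> (\<Sum>B\<in>SS. (1 + alpha t * \<beta>) * d (t - 1) B + 2 * alpha t * \<epsilon> * \<beta>
                 + (alpha t / real b) * (if i \<in> B t then 2 * L else 0))"
    by (rule sum_mono) (rule step)
  also have "\<dots> = (1 + alpha t * \<beta>) * (\<Sum>B\<in>SS. d (t - 1) B) + real (card SS) * (2 * alpha t * \<epsilon> * \<beta>)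
                 + (alpha t / real b) * (2 * L) * real (card {B \<in> SS. i \<in> B t})"
  proof -
    have c: "(\<Sum>B\<in>SS. (if i \<in> B t then 2 * L else 0)) = (2 * L) * real (card {B \<in> SS. i \<in> B t})"
      using sum.inter_filter[OF finSS, of "\<lambda>_. 2 * L" "\<lambda>B. i \<in> B t", symmetric] by simp
    have "(\<Sum>B\<in>SS. (alpha t / real b) * (if i \<in> B t then 2 * L else 0)) = (alpha t / real b) * (2 * L) * real (card {B \<in> SS. i \<in> B t})"
      by (simp only: sum_distrib_left[symmetric] c mult.assoc)
    then show ?thesis
      by (simp add: sum.distrib sum_distrib_left[symmetric])
  qed
  also have "\<dots> = real (card SS) * ((1 + alpha t * \<beta>) * ((\<Sum>B\<in>SS. d (t - 1) B) / real (card SS))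
                 + (alpha t * \<beta> / real n) * (2 * \<epsilon> * real n + 2 * L / \<beta>))"
    unfolding ratio using SSne finSS b_pos beta_pos i_lt
    by (simp add: field_simps)
  finally have main: "(\<Sum>B\<in>SS. d t B) / real (card SS) \<le> (1 + alpha t * \<beta>) * ((\<Sum>B\<in>SS. d (t - 1) B) / real (card SS))
                 + (alpha t * \<beta> / real n) * (2 * \<epsilon> * real n + 2 * L / \<beta>)"
    using SSne finSS by (simp add: divide_le_eq mult.commute card_gt_0_iff)
  show ?thesis
    using main SSne finSS unfolding SS_def[symmetric] d_def
    by (simp add: integral_pmf_of_set)
qed

end
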